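(* Let $n>1$ be an integer and $t\in\mathbb Z/(n)$ invertible. Let $j_0,\dots,j_{n-1}\in\mathbb Z/(n)$ (indices read in $\mathbb Z/(n)$) satisfy $j_i=j_{-i}$ and $j_{t^s i}=t^s j_i-(t^s-1)j_0$ for all $i\in\mathbb Z/(n)$ and all $s\in\mathbb Z$, and suppose that for every nonzero $i\in\mathbb Z/(n)$ there is $k\in\mathbb Z/(n)$ with $j_{i+k}-j_k$ invertible. Define $\sigma_{(i,j)}(k,l)=(tk+j,\ t(l-j_{tk+j-i}))$ on $(\mathbb Z/(n))^2$ and $r((i,j),(k,l))=(\sigma_{(i,j)}(k,l),\sigma^{-1}_{\sigma_{(i,j)}(k,l)}(i,j))$. Then $((\mathbb Z/(n))^2,r)$ is an indecomposable and irretractable solution of the YBE. If moreover (i) $j_0-j_i$ is invertible for every nonzero $i\in\mathbb Z/(n)$, and (ii) $j_i-j_k$ is invertible whenever $j_i\ne j_k$, then $((\mathbb Z/(n))^2,r)$ is a simple solution of the YBE.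
   Context: A solution of the YBE is a pair $(X,r)$, $X$ nonempty, $r:X\times X\to X\times X$, $r(x,y)=(\sigma_x(y),\gamma_y(x))$, with $r^2=\mathrm{id}$, all $\sigma_x,\gamma_x$ bijective, and $r_{12}r_{23}r_{12}=r_{23}r_{12}r_{23}$ on $X^3$. Indecomposable: $\langle\sigma_x\rangle\le \mathrm{Sym}_X$ transitive on $X$. Irretractable: $\sigma_x\ne\sigma_y$ for $x\ne y$. A homomorphism of solutions $f:(X,r)\to(Y,s)$ (with $s(t,z)=(\sigma'_t(z),\gamma'_z(t))$) is a map with $f(\sigma_x(y))=\sigma'_{f(x)}(f(y))$; $(X,r)$ is simple if $|X|>1$ and every surjective homomorphism of solutions $f:(X,r)\to(Y,s)$ is bijective or has $|Y|=1$. *)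

theory Defs
  imports "HOL-Number_Theory.Cong"
begin

definition sig :: "('a \<times> 'a \<Rightarrow> 'a \<times> 'a) \<Rightarrow> 'a \<Rightarrow> 'a \<Rightarrow> 'a" where
  "sig r x y = fst (r (x, y))"

definition gam :: "('a \<times> 'a \<Rightarrow> 'a \<times> 'a) \<Rightarrow> 'a \<Rightarrow> 'a \<Rightarrow> 'a" where
  "gam r y x = snd (r (x, y))"

definition r12 :: "('a \<times> 'a \<Rightarrow> 'a \<times> 'a) \<Rightarrow> 'a \<times> 'a \<times> 'a \<Rightarrow> 'a \<times> 'a \<times> 'a" where
  "r12 r v = (case v of (x, y, z) \<Rightarrow> (fst (r (x, y)), snd (r (x, y)), z))"

definition r23 :: "('a \<times> 'a \<Rightarrow> 'a \<times> 'a) \<Rightarrow> 'a \<times> 'a \<times> 'a \<Rightarrow> 'a \<times> 'a \<times> 'a" where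
  "r23 r v = (case v of (x, y, z) \<Rightarrow> (x, fst (r (y, z)), snd (r (y, z))))"

definition is_solution :: "'a set \<Rightarrow> ('a \<times> 'a \<Rightarrow> 'a \<times> 'a) \<Rightarrow> bool" where
  "is_solution X r \<longleftrightarrow>
     X \<noteq> {} \<and>
     (\<forall>x\<in>X. \<forall>y\<in>X. r (x, y) \<in> X \<times> X) \<and>
     (\<forall>x\<in>X. bij_betw (sig r x) X X) \<and>
     (\<forall>y\<in>X. bij_betw (gam r y) X X) \<and>
     (\<forall>x\<in>X. \<forall>y\<in>X. r (r (x, y)) = (x, y)) \<and>
     (\<forall>x\<in>X. \<forall>y\<in>X. \<forall>z\<in>X.
        r12 r (r23 r (r12 r (x, y, z))) = r23 r (r12 r (r23 r (x, y, z))))"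

text \<open>The permutation group generated by the sigma_x (as maps on X; values outside X irrelevant).\<close>
inductive_set sigma_group :: "'a set \<Rightarrow> ('a \<times> 'a \<Rightarrow> 'a \<times> 'a) \<Rightarrow> ('a \<Rightarrow> 'a) set"
  for X r where
  idI: "(\<lambda>z. z) \<in> sigma_group X r"
| sigI: "x \<in> X \<Longrightarrow> g \<in> sigma_group X r \<Longrightarrow> sig r x \<circ> g \<in> sigma_group X r"
| invI: "x \<in> X \<Longrightarrow> g \<in> sigma_group X r \<Longrightarrow> inv_into X (sig r x) \<circ> g \<in> sigma_group X r"

definition indecomposable :: "'a set \<Rightarrow> ('a \<times> 'a \<Rightarrow> 'a \<times> 'a) \<Rightarrow> bool" where
  "indecomposable X r \<longleftrightarrow> (\<forall>x\<in>X. \<forall>y\<in>X. \<exists>g\<in>sigma_group X r. g x = y)"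

definition irretractable :: "'a set \<Rightarrow> ('a \<times> 'a \<Rightarrow> 'a \<times> 'a) \<Rightarrow> bool" where
  "irretractable X r \<longleftrightarrow> (\<forall>x\<in>X. \<forall>y\<in>X. x \<noteq> y \<longrightarrow> (\<exists>z\<in>X. sig r x z \<noteq> sig r y z))"

definition is_hom :: "'a set \<Rightarrow> ('a \<times> 'a \<Rightarrow> 'a \<times> 'a) \<Rightarrow> 'b set \<Rightarrow> ('b \<times> 'b \<Rightarrow> 'b \<times> 'b)
     \<Rightarrow> ('a \<Rightarrow> 'b) \<Rightarrow> bool" where
  "is_hom X r Y s f \<longleftrightarrow> f ` X \<subseteq> Y \<and>
     (\<forall>x\<in>X. \<forall>y\<in>X. f (sig r x y) = sig s (f x) (f y))"

text \<open>Simplicity, with target solutions ranging over carriers in the type 'b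
  (used with a free type variable, i.e. universally quantified over all types).\<close>
definition is_simple :: "'a set \<Rightarrow> ('a \<times> 'a \<Rightarrow> 'a \<times> 'a) \<Rightarrow> 'b itself \<Rightarrow> bool" where
  "is_simple X r _ \<longleftrightarrow> card X > 1 \<and>
     (\<forall>(Y :: 'b set) s f. is_solution Y s \<and> is_hom X r Y s f \<and> f ` X = Y
        \<longrightarrow> bij_betw f X Y \<or> card Y = 1)"

section \<open>Z/(n) represented by the integers 0..n-1, arithmetic mod n\<close>

definition zpow_mod :: "int \<Rightarrow> int \<Rightarrow> int \<Rightarrow> int" where
  "zpow_mod n t s = (if 0 \<le> s then t ^ nat s
                     else (SOME u. [t * u = 1] (mod n)) ^ nat (- s))"

definition carrierZ2 :: "int \<Rightarrow> (int \<times> int) set" where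
  "carrierZ2 n = {0..<n} \<times> {0..<n}"

definition sigZ :: "int \<Rightarrow> int \<Rightarrow> (int \<Rightarrow> int) \<Rightarrow> int \<times> int \<Rightarrow> int \<times> int \<Rightarrow> int \<times> int" where
  "sigZ n t j p q = (case p of (i, a) \<Rightarrow> case q of (k, l) \<Rightarrow>
      ((t * k + a) mod n, (t * (l - j ((t * k + a - i) mod n))) mod n))"

definition rZ :: "int \<Rightarrow> int \<Rightarrow> (int \<Rightarrow> int) \<Rightarrow> (int \<times> int) \<times> (int \<times> int) \<Rightarrow> (int \<times> int) \<times> (int \<times> int)" where
  "rZ n t j pq = (case pq of (p, q) \<Rightarrow>
      (sigZ n t j p q, inv_into (carrierZ2 n) (sigZ n t j (sigZ n t j p q)) p))"

end

theory Submission
  imports Defs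
begin


lemma abstract_solution:
  fixes X :: "'a set" and \<sigma> :: "'a \<Rightarrow> 'a \<Rightarrow> 'a" and r
  assumes ne: "X \<noteq> {}"
    and bij: "\<And>x. x \<in> X \<Longrightarrow> bij_betw (\<sigma> x) X X"
    and C: "\<And>x y z. x \<in> X \<Longrightarrow> y \<in> X \<Longrightarrow> z \<in> X \<Longrightarrow>
             \<sigma> x (\<sigma> y z) = \<sigma> (\<sigma> x y) (\<sigma> (inv_into X (\<sigma> (\<sigma> x y)) x) z)"
    and gb: "\<And>y. y \<in> X \<Longrightarrow> bij_betw (\<lambda>x. inv_into X (\<sigma> (\<sigma> x y)) x) X X"
    and r: "\<And>p q. r (p, q) = (\<sigma> p q, inv_into X (\<sigma> (\<sigma> p q)) p)"
  shows "is_solution X r"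
proof -
  have inX: "\<sigma> x y \<in> X" if "x \<in> X" "y \<in> X" for x y
    using bij[OF that(1)] that(2) by (auto simp: bij_betw_def)
  have ivX: "inv_into X (\<sigma> x) y \<in> X" if "x \<in> X" "y \<in> X" for x y
    using bij[OF that(1)] that(2) by (metis bij_betw_def inv_into_into)
  have fi: "\<sigma> x (inv_into X (\<sigma> x) y) = y" if "x \<in> X" "y \<in> X" for x y
    using bij[OF that(1)] that(2) by (metis bij_betw_def f_inv_into_f)
  have iff: "inv_into X (\<sigma> x) (\<sigma> x y) = y" if "x \<in> X" "y \<in> X" for x y
    using bij[OF that(1)] that(2) by (metis bij_betw_def inv_into_f_f)
  have sigr: "sig r x y = \<sigma> x y" for x y by (simp add: sig_def r)
  have gamr: "gam r y x = inv_into X (\<sigma> (\<sigma> x y)) x" for x y by (simp add: gam_def r)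
  have invol: "r (r (x, y)) = (x, y)" if "x \<in> X" "y \<in> X" for x y
    using that by (simp add: r fi iff inX)
  have ybe: "r12 r (r23 r (r12 r (x, y, z))) = r23 r (r12 r (r23 r (x, y, z)))"
    if x: "x \<in> X" and y: "y \<in> X" and z: "z \<in> X" for x y z
  proof -
    define a where "a = \<sigma> x y"
    define b where "b = inv_into X (\<sigma> a) x"
    define c where "c = \<sigma> b z"
    define d where "d = inv_into X (\<sigma> c) b"
    define e where "e = \<sigma> y z"
    define f where "f = inv_into X (\<sigma> e) y"
    define g where "g = \<sigma> x e"
    define h where "h = inv_into X (\<sigma> g) x"
    have aX: "a \<in> X" and bX: "b \<in> X" and cX: "c \<in> X" and dX: "d \<in> X"
      and eX: "e \<in> X" and fX: "f \<in> X" and gX: "g \<in> X" and hX: "h \<in> X"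
      using x y z by (simp_all add: a_def b_def c_def d_def e_def f_def g_def h_def inX ivX)
    have L: "r12 r (r23 r (r12 r (x, y, z))) = (\<sigma> a c, inv_into X (\<sigma> (\<sigma> a c)) a, d)"
      by (simp add: r12_def r23_def r a_def b_def c_def d_def)
    have R: "r23 r (r12 r (r23 r (x, y, z))) = (g, \<sigma> h f, inv_into X (\<sigma> (\<sigma> h f)) h)"
      by (simp add: r12_def r23_def r e_def f_def g_def h_def)
    have 1: "\<sigma> a c = g"
      using C[OF x y z] by (simp add: a_def b_def c_def g_def e_def)
    have Cxe: "\<sigma> x (\<sigma> e w) = \<sigma> g (\<sigma> h w)" if "w \<in> X" for w
      using C[OF x eX that] by (simp add: g_def h_def)
    have "\<sigma> g (\<sigma> h f) = a"
      using Cxe[OF fX] by (simp add: f_def fi eX y a_def)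
    hence 2: "inv_into X (\<sigma> g) a = \<sigma> h f"
      using iff[OF gX inX[OF hX fX]] by simp
    have Cac: "\<sigma> a (\<sigma> c w) = \<sigma> g (\<sigma> (\<sigma> h f) w)" if "w \<in> X" for w
      using C[OF aX cX that] 1 2 by simp
    have "\<sigma> g (\<sigma> (\<sigma> h f) d) = x"
    proof -
      have "\<sigma> c d = b" by (simp add: d_def fi cX bX)
      moreover have "\<sigma> a b = x" by (simp add: b_def fi aX x)
      ultimately show ?thesis using Cac[OF dX] by simp
    qed
    hence "\<sigma> (\<sigma> h f) d = h"
      by (metis gX h_def iff inX hX fX dX)
    hence 3: "inv_into X (\<sigma> (\<sigma> h f)) h = d"
      by (metis iff inX hX fX dX)
    show ?thesis using L R 1 2 3 by simp
  qed
  have s1: "\<forall>x\<in>X. bij_betw (sig r x) X X"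
    using bij by (simp add: sigr[abs_def])
  have s2: "\<forall>y\<in>X. bij_betw (gam r y) X X"
    using gb by (simp add: gamr[abs_def])
  have s3: "\<forall>x\<in>X. \<forall>y\<in>X. r (x, y) \<in> X \<times> X"
    by (simp add: r inX ivX)
  show ?thesis
    unfolding is_solution_def
    using ne invol ybe s1 s2 s3 by blast
qed



locale Zc =
  fixes n t :: int and j :: "int \<Rightarrow> int"
  assumes n_gt: "n > 1" and tu: "coprime t n"
    and jsym0: "\<And>i. [j ((- i) mod n) = j (i mod n)] (mod n)"
    and jt0: "\<And>i. [j ((t * i) mod n) = t * j (i mod n) - (t - 1) * j 0] (mod n)"
    and jsep0: "\<And>i. i mod n \<noteq> 0 \<Longrightarrow> \<exists>k. coprime (j ((i + k) mod n) - j (k mod n)) n"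
begin

definition J :: "int \<Rightarrow> int" where "J x = j (x mod n)"

abbreviation X where "X \<equiv> carrierZ2 n"
abbreviation \<sigma> where "\<sigma> \<equiv> sigZ n t j"

lemma J_mod[simp]: "J (x mod n) = J x" by (simp add: J_def)
lemma J_cong: "[x = y] (mod n) \<Longrightarrow> J x = J y" by (simp add: J_def cong_def)
lemma jsym: "[J (- x) = J x] (mod n)" using jsym0 by (simp add: J_def)
lemma jt: "[J (t * x) = t * J x - (t - 1) * J 0] (mod n)" using jt0[of x] by (simp add: J_def)
lemma jsep: "x mod n \<noteq> 0 \<Longrightarrow> \<exists>k. coprime (J (x + k) - J k) n"
  using jsep0 by (simp add: J_def)

lemma sig: "\<sigma> (i, a) (k, l) = ((t * k + a) mod n, (t * (l - J (t * k + a - i))) mod n)"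
  by (simp add: sigZ_def J_def)

lemma memX: "(a, b) \<in> X \<longleftrightarrow> 0 \<le> a \<and> a < n \<and> 0 \<le> b \<and> b < n"
  by (auto simp: carrierZ2_def)

lemma n_pos: "n > 0" using n_gt by simp

lemma mod_in: "0 \<le> x mod n" "x mod n < n" using n_pos by auto

lemma sig_in: "\<sigma> x y \<in> X"
  by (cases x; cases y) (simp add: sig memX mod_in)

lemma red: "0 \<le> a \<Longrightarrow> a < n \<Longrightarrow> a mod n = a" by simp

lemma eq_of_cong: "[a = b] (mod n) \<Longrightarrow> 0 \<le> a \<Longrightarrow> a < n \<Longrightarrow> 0 \<le> b \<Longrightarrow> b < n \<Longrightarrow> a = b"
  by (simp add: cong_def)

lemma tcancel: "[t * a = t * b] (mod n) \<longleftrightarrow> [a = b] (mod n)"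
  using tu by (rule cong_mult_lcancel)

lemma solve: "\<exists>k. 0 \<le> k \<and> k < n \<and> [t * k = c] (mod n)"
proof -
  obtain s where s: "[t * s = 1] (mod n)" using cong_solve_coprime_int[OF tu] by blast
  have "[t * ((s * c) mod n) = (t * s) * c] (mod n)"
    by (simp add: cong_def mod_simps mult.assoc)
  also have "[(t * s) * c = 1 * c] (mod n)" using s by (rule cong_scalar_right)
  finally show ?thesis using mod_in by auto
qed

lemma sig_inj: "inj_on (\<sigma> x) X"
proof (rule inj_onI)
  fix y y' assume y: "y \<in> X" and y': "y' \<in> X" and e: "\<sigma> x y = \<sigma> x y'"
  obtain i a where x: "x = (i, a)" by (cases x)
  obtain k l where yy: "y = (k, l)" by (cases y)
  obtain k' l' where yy': "y' = (k', l')" by (cases y')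
  from e have e1: "[t * k + a = t * k' + a] (mod n)"
    and e2: "[t * (l - J (t * k + a - i)) = t * (l' - J (t * k' + a - i))] (mod n)"
    by (simp_all add: x yy yy' sig cong_def)
  from e1 have "[t * k = t * k'] (mod n)" by (simp only: cong_add_rcancel)
  hence kk: "[k = k'] (mod n)" by (simp add: tcancel)
  hence "k = k'" using y y' by (simp add: yy yy' memX eq_of_cong)
  with e2 have "[l - J (t * k + a - i) = l' - J (t * k + a - i)] (mod n)" by (simp only: tcancel)
  hence "[l = l'] (mod n)" using cong_add[OF _ cong_refl, of "l - J (t * k + a - i)" "l' - J (t * k + a - i)" n "J (t * k + a - i)"] by simp
  hence "l = l'" using y y' by (simp add: yy yy' memX eq_of_cong)
  with \<open>k = k'\<close> show "y = y'" by (simp add: yy yy')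
qed

lemma finX: "finite X" by (simp add: carrierZ2_def)

lemma sig_bij: "bij_betw (\<sigma> x) X X"
proof -
  have "\<sigma> x ` X \<subseteq> X" by (simp add: image_subset_iff sig_in)
  hence "\<sigma> x ` X = X" using endo_inj_surj[OF finX _ sig_inj] by blast
  thus ?thesis using sig_inj by (simp add: bij_betw_def)
qed


lemma cong_addl: "[a = b] (mod n) \<Longrightarrow> [c + a = c + b] (mod n)" by (simp add: cong_add)
lemma cong_addr: "[a = b] (mod n) \<Longrightarrow> [a + c = b + c] (mod n)" by (simp add: cong_add)
lemma cong_subl: "[a = b] (mod n) \<Longrightarrow> [c - a = c - b] (mod n)" by (simp add: cong_diff)
lemma cong_subr: "[a = b] (mod n) \<Longrightarrow> [a - c = b - c] (mod n)" by (simp add: cong_diff)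
lemma cong_mull: "[a = b] (mod n) \<Longrightarrow> [c * a = c * b] (mod n)" by (simp add: cong_mult)
lemma modr: "[a mod n = a] (mod n)" by simp
lemmas rmI = cong_add cong_diff cong_mult cong_refl modr cong_uminus

lemma pair_eq: "[a = c] (mod n) \<Longrightarrow> [b = d] (mod n) \<Longrightarrow> (a mod n, b mod n) = (c mod n, d mod n)"
  by (simp add: cong_def)

lemma condC:
  assumes x: "x \<in> X" and y: "y \<in> X" and y': "y' \<in> X" and h: "\<sigma> (\<sigma> x y) y' = x"
  shows "\<sigma> x (\<sigma> y z) = \<sigma> (\<sigma> x y) (\<sigma> y' z)"
proof -
  obtain x1 x2 where xx: "x = (x1, x2)" by (cases x)
  obtain y1 y2 where yy: "y = (y1, y2)" by (cases y)
  obtain p q where yy': "y' = (p, q)" by (cases y')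
  obtain k l where zz: "z = (k, l)" by (cases z)
  define w where "w = t * y1 + x2 - x1"
  define X1 where "X1 = (t * y1 + x2) mod n"
  define X2 where "X2 = (t * (y2 - J w)) mod n"
  have sxy0: "\<sigma> (x1, x2) (y1, y2) = (X1, X2)" by (simp add: sig X1_def X2_def w_def)
  hence sxy: "\<sigma> x y = (X1, X2)" by (simp add: xx yy)
  have x1r: "x1 mod n = x1" and x2r: "x2 mod n = x2" using x by (simp_all add: xx memX)
  from h[unfolded sxy yy'] have "(t * p + X2) mod n = x1" and "(t * (q - J (t * p + X2 - X1))) mod n = x2"
    by (simp_all add: xx sig)
  hence h1: "[t * p + X2 = x1] (mod n)" and h2: "[t * (q - J (t * p + X2 - X1)) = x2] (mod n)"
    by (simp_all add: cong_def x1r x2r)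
  have "[t * p + X2 - X1 = x1 - (t * y1 + x2)] (mod n)"
    using cong_diff[OF h1, of X1 "t * y1 + x2"] by (simp add: X1_def)
  also have "x1 - (t * y1 + x2) = - w" by (simp add: w_def)
  finally have "J (t * p + X2 - X1) = J (- w)" by (rule J_cong)
  with h2 have "[t * (q - J (- w)) = x2] (mod n)" by simp
  hence "[t * (q - J w) = x2] (mod n)"
    by (metis cong_mull cong_subl cong_trans cong_sym jsym)
  hence "[t * (q - J w) + t * J w = x2 + t * J w] (mod n)" by (rule cong_addr)
  hence hq: "[t * q = x2 + t * J w] (mod n)" by (simp add: algebra_simps)
  have hp: "[t * p = x1 - X2] (mod n)"
    using cong_subr[OF h1, of X2] by simp
  define A where "A = t * k + y2 - y1"
  define B where "B = t * t * k + t * y2 + x2 - x1"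
  define Cc where "Cc = t * k + q - p"
  have LHS: "\<sigma> x (\<sigma> y z) = ((t * ((t * k + y2) mod n) + x2) mod n,
      (t * ((t * (l - J A)) mod n - J (t * ((t * k + y2) mod n) + x2 - x1))) mod n)"
    by (simp add: xx yy zz sig A_def)
  have RHS: "\<sigma> (\<sigma> x y) (\<sigma> y' z) = ((t * ((t * k + q) mod n) + X2) mod n,
      (t * ((t * (l - J Cc)) mod n - J (t * ((t * k + q) mod n) + X2 - X1))) mod n)"
    by (simp add: sxy yy' zz sig Cc_def)
  have "[t * ((t * k + y2) mod n) + x2 - x1 = t * (t * k + y2) + x2 - x1] (mod n)"
    by (intro rmI)
  also have "t * (t * k + y2) + x2 - x1 = B" by (simp add: B_def algebra_simps)
  finally have JB: "J (t * ((t * k + y2) mod n) + x2 - x1) = J B" by (rule J_cong)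
  have "[t * ((t * k + q) mod n) + X2 - X1 = t * (t * k + q) + t * (y2 - J w) - (t * y1 + x2)] (mod n)"
    unfolding X1_def X2_def by (intro rmI)
  also have "t * (t * k + q) + t * (y2 - J w) - (t * y1 + x2) = t * t * k + t * q + t * (y2 - J w) - (t * y1 + x2)"
    by (simp add: algebra_simps)
  also have "[t * t * k + t * q + t * (y2 - J w) - (t * y1 + x2) = t * t * k + (x2 + t * J w) + t * (y2 - J w) - (t * y1 + x2)] (mod n)"
    by (intro cong_subr cong_addr cong_addl hq)
  also have "t * t * k + (x2 + t * J w) + t * (y2 - J w) - (t * y1 + x2) = t * A"
    by (simp add: A_def algebra_simps)
  finally have JtA: "J (t * ((t * k + q) mod n) + X2 - X1) = J (t * A)" by (rule J_cong)
  have "[t * Cc = t * t * k + t * q - t * p] (mod n)" by (simp add: Cc_def algebra_simps)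
  also have "[t * t * k + t * q - t * p = t * t * k + (x2 + t * J w) - (x1 - X2)] (mod n)"
    by (intro cong_diff cong_addl hq hp)
  also have "[t * t * k + (x2 + t * J w) - (x1 - X2) = t * t * k + (x2 + t * J w) - (x1 - t * (y2 - J w))] (mod n)"
    unfolding X2_def by (intro rmI)
  also have "t * t * k + (x2 + t * J w) - (x1 - t * (y2 - J w)) = B" by (simp add: B_def algebra_simps)
  finally have tC: "[t * Cc = B] (mod n)" .
  have c1: "[t * ((t * k + y2) mod n) + x2 = t * ((t * k + q) mod n) + X2] (mod n)"
  proof -
    have "[t * ((t * k + y2) mod n) + x2 = t * (t * k + y2) + x2] (mod n)"
      by (intro rmI)
    also have "t * (t * k + y2) + x2 = t * t * k + t * y2 + x2" by (simp add: algebra_simps)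
    also have "t * t * k + t * y2 + x2 = t * t * k + (x2 + t * J w) + t * (y2 - J w)"
      by (simp add: algebra_simps)
    also have "[t * t * k + (x2 + t * J w) + t * (y2 - J w) = t * t * k + t * q + t * (y2 - J w)] (mod n)"
      by (intro cong_addr cong_addl cong_sym[OF hq])
    also have "t * t * k + t * q + t * (y2 - J w) = t * (t * k + q) + t * (y2 - J w)"
      by (simp add: algebra_simps)
    also have "[t * (t * k + q) + t * (y2 - J w) = t * ((t * k + q) mod n) + X2] (mod n)"
      unfolding X2_def by (intro rmI cong_sym[OF modr])
    finally show ?thesis .
  qed
  have c2: "[t * ((t * (l - J A)) mod n - J B) = t * ((t * (l - J Cc)) mod n - J (t * A))] (mod n)"
  proof -
    have e1: "[J B = t * J Cc - (t - 1) * J 0] (mod n)"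
      using jt[of Cc] J_cong[OF tC] by simp
    have e2: "[J (t * A) = t * J A - (t - 1) * J 0] (mod n)" by (rule jt)
    have "[t * ((t * (l - J A)) mod n - J B) = t * (t * (l - J A) - (t * J Cc - (t - 1) * J 0))] (mod n)"
      by (intro cong_mull cong_diff e1 modr)
    also have "t * (t * (l - J A) - (t * J Cc - (t - 1) * J 0)) = t * (t * (l - J Cc) - (t * J A - (t - 1) * J 0))"
      by (simp add: algebra_simps)
    also have "[t * (t * (l - J Cc) - (t * J A - (t - 1) * J 0)) = t * ((t * (l - J Cc)) mod n - J (t * A))] (mod n)"
      by (intro cong_mull cong_diff cong_sym[OF e2] cong_sym[OF modr])
    finally show ?thesis .
  qed
  show ?thesis unfolding LHS RHS JB JtA by (rule pair_eq[OF c1 c2])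
qed


lemma gam_char:
  assumes x: "x \<in> X" and h: "\<sigma> (\<sigma> x y) w = x"
  shows "x = ((t * fst w + t * snd y - t * J (t * fst y + t * snd w - t * fst w - t * snd y)) mod n,
              (t * snd w - t * J (t * fst y + t * snd w - t * fst w - t * snd y)) mod n)"
proof -
  obtain i a where xx: "x = (i, a)" by (cases x)
  obtain k l where yy: "y = (k, l)" by (cases y)
  obtain p q where ww: "w = (p, q)" by (cases w)
  have ir: "i mod n = i" and ar: "a mod n = a" using x by (simp_all add: xx memX)
  define W0 where "W0 = t * k + a - i"
  define u where "u = (t * k + a) mod n"
  define v where "v = (t * (l - J W0)) mod n"
  have sxy: "\<sigma> (i, a) (k, l) = (u, v)" by (simp add: sig u_def v_def W0_def)
  from h[unfolded xx yy ww sxy] have "(t * p + v) mod n = i" and "(t * (q - J (t * p + v - u))) mod n = a"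
    by (simp_all add: sig)
  hence h1: "[t * p + v = i] (mod n)" and h2: "[t * (q - J (t * p + v - u)) = a] (mod n)"
    by (simp_all add: cong_def ir ar)
  have "[t * p + v - u = i - (t * k + a)] (mod n)"
    unfolding u_def by (intro cong_diff h1 modr)
  also have "i - (t * k + a) = - W0" by (simp add: W0_def)
  finally have "J (t * p + v - u) = J (- W0)" by (rule J_cong)
  with h2 have "[t * (q - J (- W0)) = a] (mod n)" by simp
  hence ha: "[a = t * q - t * J W0] (mod n)"
    by (metis (no_types, lifting) cong_mull cong_subl cong_trans cong_sym jsym right_diff_distrib)
  have "[i = t * p + v] (mod n)" using h1 by (rule cong_sym)
  also have "[t * p + v = t * p + t * (l - J W0)] (mod n)" unfolding v_def by (intro rmI)
  finally have hi: "[i = t * p + t * l - t * J W0] (mod n)" by (simp add: algebra_simps)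
  have "[t * k + a - i = t * k + (t * q - t * J W0) - (t * p + t * l - t * J W0)] (mod n)"
    by (intro cong_diff cong_add cong_refl ha hi)
  hence "[W0 = t * k + (t * q - t * J W0) - (t * p + t * l - t * J W0)] (mod n)"
    by (simp only: W0_def[symmetric])
  hence "[W0 = t * k + t * q - t * p - t * l] (mod n)" by (simp add: algebra_simps)
  hence JW: "J W0 = J (t * k + t * q - t * p - t * l)" by (rule J_cong)
  have "i = (t * p + t * l - t * J (t * k + t * q - t * p - t * l)) mod n"
    using hi ir JW by (simp add: cong_def)
  moreover have "a = (t * q - t * J (t * k + t * q - t * p - t * l)) mod n"
    using ha ar JW by (simp add: cong_def)
  ultimately show ?thesis by (simp add: xx yy ww)
qed

lemma inv_props:
  assumes "x \<in> X" "y \<in> X"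
  shows "inv_into X (\<sigma> x) y \<in> X" "\<sigma> x (inv_into X (\<sigma> x) y) = y"
  using sig_bij[of x] assms
  by (metis bij_betw_def inv_into_into, metis bij_betw_def f_inv_into_f)

lemma inv_eq: "x \<in> X \<Longrightarrow> y \<in> X \<Longrightarrow> inv_into X (\<sigma> x) (\<sigma> x y) = y"
  using sig_inj by (simp add: inv_into_f_f)

lemma gam_bij:
  assumes y: "y \<in> X"
  shows "bij_betw (\<lambda>x. inv_into X (\<sigma> (\<sigma> x y)) x) X X"
proof -
  let ?g = "\<lambda>x. inv_into X (\<sigma> (\<sigma> x y)) x"
  have "\<And>x. x \<in> X \<Longrightarrow> ?g x \<in> X" using inv_props(1)[OF sig_in] by blast
  hence sub: "?g ` X \<subseteq> X" by (simp add: image_subset_iff)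
  have inj: "inj_on ?g X"
  proof (rule inj_onI)
    fix x x' assume x: "x \<in> X" and x': "x' \<in> X" and e: "?g x = ?g x'"
    have 1: "\<sigma> (\<sigma> x y) (?g x) = x" by (rule inv_props(2)[OF sig_in x])
    have 2: "\<sigma> (\<sigma> x' y) (?g x) = x'" using e inv_props(2)[OF sig_in x'] by simp
    show "x = x'" using gam_char[OF x 1] gam_char[OF x' 2] by simp
  qed
  have "?g ` X = X" using endo_inj_surj[OF finX sub inj] .
  thus ?thesis using inj by (simp add: bij_betw_def)
qed

lemma is_sol: "is_solution X (rZ n t j)"
proof (rule abstract_solution[where \<sigma> = \<sigma>])
  show "X \<noteq> {}" using memX[of 0 0] n_pos by auto
  show "\<And>x. x \<in> X \<Longrightarrow> bij_betw (\<sigma> x) X X" by (rule sig_bij)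
  show "\<And>y. y \<in> X \<Longrightarrow> bij_betw (\<lambda>x. inv_into X (\<sigma> (\<sigma> x y)) x) X X" by (rule gam_bij)
  show "\<And>p q. rZ n t j (p, q) = (\<sigma> p q, inv_into X (\<sigma> (\<sigma> p q)) p)" by (simp add: rZ_def)
  fix x y z assume x: "x \<in> X" and y: "y \<in> X" and z: "z \<in> X"
  show "\<sigma> x (\<sigma> y z) = \<sigma> (\<sigma> x y) (\<sigma> (inv_into X (\<sigma> (\<sigma> x y)) x) z)"
    by (rule condC[OF x y inv_props(1)[OF sig_in x] inv_props(2)[OF sig_in x]])
qed

end


context Zc begin

lemma sig_rZ: "sig (rZ n t j) = \<sigma>"
  by (auto simp: sig_def rZ_def fun_eq_iff)

lemma unit_nz: "coprime c n \<Longrightarrow> [c = 0] (mod n) \<Longrightarrow> False"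
proof -
  assume c: "coprime c n" and z: "[c = 0] (mod n)"
  hence "n dvd c" by (simp add: cong_0_iff)
  hence "is_unit n" using coprime_common_divisor[OF c _ dvd_refl] by blast
  thus False using n_gt by simp
qed

lemma unit_cancel: "coprime (b - a) n \<Longrightarrow> [a = b] (mod n) \<Longrightarrow> False"
  using unit_nz cong_diff_iff_cong_0 cong_sym by metis

definition reach where "reach p q \<longleftrightarrow> (\<exists>g\<in>sigma_group X (rZ n t j). g p = q)"

lemma reach_refl: "reach p p"
  unfolding reach_def using sigma_group.idI by fastforce

lemma reach_sig: assumes r: "reach p q" and x: "x \<in> X" shows "reach p (\<sigma> x q)"
proof -
  obtain g where g: "g \<in> sigma_group X (rZ n t j)" "g p = q" using r reach_def by blast
  have "sig (rZ n t j) x \<circ> g \<in> sigma_group X (rZ n t j)" by (rule sigma_group.sigI[OF x g(1)])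
  hence "\<sigma> x \<circ> g \<in> sigma_group X (rZ n t j)" by (simp only: sig_rZ)
  moreover have "(\<sigma> x \<circ> g) p = \<sigma> x q" using g(2) by simp
  ultimately show ?thesis unfolding reach_def by blast
qed

lemma reach_inv: assumes r: "reach p q" and x: "x \<in> X" shows "reach p (inv_into X (\<sigma> x) q)"
proof -
  obtain g where g: "g \<in> sigma_group X (rZ n t j)" "g p = q" using r reach_def by blast
  have "inv_into X (sig (rZ n t j) x) \<circ> g \<in> sigma_group X (rZ n t j)" by (rule sigma_group.invI[OF x g(1)])
  hence "inv_into X (\<sigma> x) \<circ> g \<in> sigma_group X (rZ n t j)" by (simp only: sig_rZ)
  moreover have "(inv_into X (\<sigma> x) \<circ> g) p = inv_into X (\<sigma> x) q" using g(2) by simp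
  ultimately show ?thesis unfolding reach_def by blast
qed

lemma vmove:
  assumes "(i, a) \<in> X" "(i', a) \<in> X" "(k, l) \<in> X"
  shows "\<sigma> (i', a) (k, (l - J (t * k + a - i) + J (t * k + a - i')) mod n) = \<sigma> (i, a) (k, l)"
proof -
  have "[t * ((l - J (t * k + a - i) + J (t * k + a - i')) mod n - J (t * k + a - i'))
        = t * ((l - J (t * k + a - i) + J (t * k + a - i')) - J (t * k + a - i'))] (mod n)"
    by (intro rmI)
  hence "(t * ((l - J (t * k + a - i) + J (t * k + a - i')) mod n - J (t * k + a - i'))) mod n
       = (t * (l - J (t * k + a - i))) mod n" by (simp add: cong_def)
  thus ?thesis by (simp add: sig)
qed

lemma reach_vert:
  assumes r: "reach p (k, l)" and kl: "(k, l) \<in> X" and ia: "(i, a) \<in> X" and i'a: "(i', a) \<in> X"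
  shows "reach p (k, (l - J (t * k + a - i) + J (t * k + a - i')) mod n)"
proof -
  let ?w = "(k, (l - J (t * k + a - i) + J (t * k + a - i')) mod n)"
  have wX: "?w \<in> X" using kl by (simp add: memX mod_in)
  have "inv_into X (\<sigma> (i', a)) (\<sigma> (i, a) (k, l)) = ?w"
    using vmove[OF ia i'a kl] inv_eq[OF i'a wX] by simp
  thus ?thesis using reach_inv[OF reach_sig[OF r ia] i'a] by simp
qed

lemma gen_unit: "\<exists>m. coprime (J (1 + m) - J m) n"
  using jsep[of 1] n_gt by simp

lemma reach_step:
  assumes r: "reach p (k, l)" and kl: "(k, l) \<in> X" and c: "c = J (1 + m) - J m"
  shows "reach p (k, (l + c) mod n)"
proof -
  define i where "i = (t * k - m) mod n"
  define i' where "i' = (t * k - m - 1) mod n"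
  have X1: "(i, 0) \<in> X" "(i', 0) \<in> X" using n_pos by (simp_all add: memX i_def i'_def mod_in)
  have e1: "J (t * k + 0 - i) = J m"
    by (rule J_cong) (simp add: i_def cong_def mod_simps)
  have e2: "J (t * k + 0 - i') = J (1 + m)"
    by (rule J_cong) (simp add: i'_def cong_def mod_simps add.commute)
  have "reach p (k, (l - J (t * k + 0 - i) + J (t * k + 0 - i')) mod n)"
    by (rule reach_vert[OF r kl X1])
  hence "reach p (k, (l - J m + J (1 + m)) mod n)" unfolding e1 e2 .
  moreover have "l - J m + J (1 + m) = l + c" by (simp add: c)
  ultimately show ?thesis by simp
qed

lemma reach_column:
  assumes r: "reach p (k, l)" and kl: "(k, l) \<in> X" and l2: "0 \<le> l2" "l2 < n"
  shows "reach p (k, l2)"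
proof -
  obtain m where cu: "coprime (J (1 + m) - J m) n" using gen_unit by blast
  define c where "c = J (1 + m) - J m"
  have it: "reach p (k, (l + int N * c) mod n)" for N :: nat
  proof (induction N)
    case 0 thus ?case using r kl by (simp add: memX)
  next
    case (Suc N)
    have mX: "(k, (l + int N * c) mod n) \<in> X" using kl by (simp add: memX mod_in)
    have e: "l + int (Suc N) * c = l + int N * c + c" by (simp add: algebra_simps)
    from reach_step[OF Suc mX c_def] show ?case
      by (simp only: e mod_add_left_eq)
  qed
  obtain s where s: "[c * s = 1] (mod n)" using cong_solve_coprime_int cu c_def by blast
  define N where "N = nat ((s * (l2 - l)) mod n)"
  have NN: "int N = (s * (l2 - l)) mod n" using mod_in by (simp add: N_def)
  have "[l + int N * c = l + (s * (l2 - l)) * c] (mod n)"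
    unfolding NN by (intro rmI)
  also have "l + (s * (l2 - l)) * c = l + (c * s) * (l2 - l)" by (simp add: algebra_simps)
  also have "[l + (c * s) * (l2 - l) = l + 1 * (l2 - l)] (mod n)"
    by (intro cong_add cong_mult s cong_refl)
  finally have "(l + int N * c) mod n = l2" using l2 by (simp add: cong_def)
  thus ?thesis using it[of N] by simp
qed

lemma reach_all:
  assumes p: "p \<in> X" and q: "q \<in> X" shows "reach p q"
proof -
  obtain k l where pp: "p = (k, l)" by (cases p)
  obtain k2 l2 where qq: "q = (k2, l2)" by (cases q)
  define b where "b = (k2 - t * k) mod n"
  have bX: "(0, b) \<in> X" using n_pos by (simp add: memX b_def mod_in)
  have "reach p (\<sigma> (0, b) p)" by (rule reach_sig[OF reach_refl bX])
  moreover have "fst (\<sigma> (0, b) p) = k2"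
  proof -
    have "(t * k + (k2 - t * k) mod n) mod n = (t * k + (k2 - t * k)) mod n" by (simp only: mod_add_right_eq)
    thus ?thesis using q by (simp add: pp qq sig b_def memX)
  qed
  moreover have "\<sigma> (0, b) p \<in> X" by (rule sig_in)
  ultimately have "reach p (k2, snd (\<sigma> (0, b) p))" "(k2, snd (\<sigma> (0, b) p)) \<in> X"
    by (metis prod.collapse)+
  from reach_column[OF this] q show ?thesis by (simp add: qq memX)
qed

lemma indec: "indecomposable X (rZ n t j)"
  unfolding indecomposable_def using reach_all unfolding reach_def by blast

lemma irr: "irretractable X (rZ n t j)"
  unfolding irretractable_def sig_rZ
proof (intro ballI impI)
  fix x y assume x: "x \<in> X" and y: "y \<in> X" and ne: "x \<noteq> y"
  obtain i a where xx: "x = (i, a)" by (cases x)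
  obtain i' a' where yy: "y = (i', a')" by (cases y)
  show "\<exists>z\<in>X. \<sigma> x z \<noteq> \<sigma> y z"
  proof (cases "a = a'")
    case False
    have "(0, 0) \<in> X" using n_pos by (simp add: memX)
    moreover have "\<sigma> x (0, 0) \<noteq> \<sigma> y (0, 0)"
      using False x y by (simp add: xx yy sig memX)
    ultimately show ?thesis by blast
  next
    case True
    hence ii: "i \<noteq> i'" using ne by (simp add: xx yy)
    have "(i - i') mod n \<noteq> 0"
    proof
      assume "(i - i') mod n = 0"
      hence "[i = i'] (mod n)" by (simp add: cong_iff_dvd_diff dvd_eq_mod_eq_0)
      thus False using ii x y eq_of_cong by (simp add: xx yy memX)
    qed
    then obtain m where cu: "coprime (J (i - i' + m) - J m) n" using jsep by blast
    obtain k where k: "0 \<le> k" "k < n" "[t * k = m + i - a] (mod n)" using solve by blast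
    have kX: "(k, 0) \<in> X" using k n_pos by (simp add: memX)
    have "[t * k + a - i = m] (mod n)"
      using cong_add[OF k(3) cong_refl[of "a - i"]] by (simp add: algebra_simps)
    hence e1: "J (t * k + a - i) = J m" by (rule J_cong)
    have "[t * k + a - i' = (t * k + a - i) + (i - i')] (mod n)" by (simp add: algebra_simps)
    also have "[(t * k + a - i) + (i - i') = m + (i - i')] (mod n)"
      by (intro cong_add cong_refl \<open>[t * k + a - i = m] (mod n)\<close>)
    finally have "[t * k + a - i' = m + (i - i')] (mod n)" .
    hence e2: "J (t * k + a - i') = J (i - i' + m)"
      by (metis J_cong add.commute)
    have "\<sigma> x (k, 0) \<noteq> \<sigma> y (k, 0)"
    proof
      assume "\<sigma> x (k, 0) = \<sigma> y (k, 0)"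
      hence "snd (\<sigma> x (k, 0)) = snd (\<sigma> y (k, 0))" by simp
      hence "(- (t * J m)) mod n = (- (t * J (i - i' + m))) mod n"
        using e1 e2 by (simp add: xx yy sig True[symmetric])
      hence "[- (t * J m) = - (t * J (i - i' + m))] (mod n)" by (simp add: cong_def)
      hence "[t * J m = t * J (i - i' + m)] (mod n)" by (simp only: cong_minus_minus_iff)
      hence "[J m = J (i - i' + m)] (mod n)" by (simp only: tcancel)
      thus False using unit_cancel cu by blast
    qed
    thus ?thesis using kX by blast
  qed
qed

end


context Zc begin

lemma col_gen:
  fixes g :: "int \<Rightarrow> 'b"
  assumes cu: "coprime c n" and st: "\<And>l. 0 \<le> l \<Longrightarrow> l < n \<Longrightarrow> g l = g ((l + c) mod n)"
    and l: "0 \<le> l" "l < n" and l2: "0 \<le> l2" "l2 < n"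
  shows "g l = g l2"
proof -
  have it: "g l = g ((l + int N * c) mod n)" for N :: nat
  proof (induction N)
    case 0 thus ?case using l by simp
  next
    case (Suc N)
    have e: "l + int (Suc N) * c = l + int N * c + c" by (simp add: algebra_simps)
    have "g ((l + int N * c) mod n) = g (((l + int N * c) mod n + c) mod n)"
      by (rule st) (simp_all add: mod_in)
    thus ?case using Suc by (simp only: e mod_add_left_eq)
  qed
  obtain s where s: "[c * s = 1] (mod n)" using cong_solve_coprime_int cu by blast
  define N where "N = nat ((s * (l2 - l)) mod n)"
  have NN: "int N = (s * (l2 - l)) mod n" using mod_in by (simp add: N_def)
  have "[l + int N * c = l + (s * (l2 - l)) * c] (mod n)"
    unfolding NN by (intro rmI)
  also have "l + (s * (l2 - l)) * c = l + (c * s) * (l2 - l)" by (simp add: algebra_simps)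
  also have "[l + (c * s) * (l2 - l) = l + 1 * (l2 - l)] (mod n)"
    by (intro cong_add cong_mult s cong_refl)
  finally have "(l + int N * c) mod n = l2" using l2 by (simp add: cong_def)
  thus ?thesis using it[of N] by simp
qed

context
  fixes Y :: "'b set" and s f
  assumes sol: "is_solution Y s" and hom: "is_hom X (rZ n t j) Y s f" and surj: "f ` X = Y"
begin

lemma fhom: "x \<in> X \<Longrightarrow> y \<in> X \<Longrightarrow> f (\<sigma> x y) = sig s (f x) (f y)"
  using hom by (simp add: is_hom_def sig_rZ)

lemma fY: "x \<in> X \<Longrightarrow> f x \<in> Y" using surj by blast

lemma sinj: "x \<in> X \<Longrightarrow> inj_on (sig s (f x)) Y"
  using sol fY unfolding is_solution_def bij_betw_def by blast

lemma F1: "x \<in> X \<Longrightarrow> x' \<in> X \<Longrightarrow> z \<in> X \<Longrightarrow> f x = f x' \<Longrightarrow> f (\<sigma> x z) = f (\<sigma> x' z)"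
  by (simp add: fhom)

lemma F2: "x \<in> X \<Longrightarrow> z \<in> X \<Longrightarrow> z' \<in> X \<Longrightarrow> f z = f z' \<Longrightarrow> f (\<sigma> x z) = f (\<sigma> x z')"
  by (simp add: fhom)

lemma cancel: "x \<in> X \<Longrightarrow> w \<in> X \<Longrightarrow> w' \<in> X \<Longrightarrow> f (\<sigma> x w) = f (\<sigma> x w') \<Longrightarrow> f w = f w'"
  using sinj[of x] fY by (simp add: fhom inj_on_def)

lemma Glem: "x \<in> X \<Longrightarrow> x' \<in> X \<Longrightarrow> z \<in> X \<Longrightarrow> w \<in> X \<Longrightarrow> f x = f x' \<Longrightarrow> \<sigma> x z = \<sigma> x' w \<Longrightarrow> f z = f w"
proof -
  assume a: "x \<in> X" "x' \<in> X" "z \<in> X" "w \<in> X" "f x = f x'" "\<sigma> x z = \<sigma> x' w"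
  have "f (\<sigma> x' w) = f (\<sigma> x' z)" using F1[OF a(1,2,3,5)] a(6) by simp
  thus "f z = f w" using cancel[OF a(2,4,3)] by simp
qed

lemma Vlem: "x \<in> X \<Longrightarrow> x' \<in> X \<Longrightarrow> z \<in> X \<Longrightarrow> w \<in> X \<Longrightarrow> z' \<in> X \<Longrightarrow> w' \<in> X \<Longrightarrow>
   \<sigma> x z = \<sigma> x' z' \<Longrightarrow> \<sigma> x w = \<sigma> x' w' \<Longrightarrow> f z = f w \<Longrightarrow> f z' = f w'"
proof -
  assume a: "x \<in> X" "x' \<in> X" "z \<in> X" "w \<in> X" "z' \<in> X" "w' \<in> X"
    "\<sigma> x z = \<sigma> x' z'" "\<sigma> x w = \<sigma> x' w'" "f z = f w"
  have "f (\<sigma> x' z') = f (\<sigma> x' w')" using F2[OF a(1,3,4,9)] a(7,8) by simp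
  thus "f z' = f w'" using cancel[OF a(2,5,6)] by simp
qed

lemma collapse:
  assumes ia: "(i, a) \<in> X" and i'a: "(i', a) \<in> X" and ii: "i \<noteq> i'" and fe: "f (i, a) = f (i', a)"
  shows "\<forall>z\<in>X. f z = f (0, 0)"
proof -
  have "(i - i') mod n \<noteq> 0"
  proof
    assume "(i - i') mod n = 0"
    hence "[i = i'] (mod n)" by (simp add: cong_iff_dvd_diff dvd_eq_mod_eq_0)
    thus False using ii ia i'a eq_of_cong by (simp add: memX)
  qed
  then obtain m where cu: "coprime (J (i - i' + m) - J m) n" using jsep by blast
  obtain k0 where k0: "0 \<le> k0" "k0 < n" "[t * k0 = m + i - a] (mod n)" using solve by blast
  have "[t * k0 + a - i = m] (mod n)"
    using cong_add[OF k0(3) cong_refl[of "a - i"]] by (simp add: algebra_simps)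
  hence e1: "J (t * k0 + a - i) = J m" by (rule J_cong)
  have "[t * k0 + a - i' = (t * k0 + a - i) + (i - i')] (mod n)" by (simp add: algebra_simps)
  also have "[(t * k0 + a - i) + (i - i') = m + (i - i')] (mod n)"
    by (intro cong_add cong_refl \<open>[t * k0 + a - i = m] (mod n)\<close>)
  finally have "[t * k0 + a - i' = m + (i - i')] (mod n)" .
  hence e2: "J (t * k0 + a - i') = J (i - i' + m)" by (metis J_cong add.commute)
  define c where "c = J (i - i' + m) - J m"
  have colk0: "f (k0, l) = f (k0, l2)" if "0 \<le> l" "l < n" "0 \<le> l2" "l2 < n" for l l2
  proof (rule col_gen[where g = "\<lambda>l. f (k0, l)", OF cu[folded c_def] _ that])
    fix l assume l: "0 \<le> l" "l < n"
    have kl: "(k0, l) \<in> X" using k0 l by (simp add: memX)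
    have wX: "(k0, (l - J (t * k0 + a - i) + J (t * k0 + a - i')) mod n) \<in> X"
      using k0 by (simp add: memX mod_in)
    have "f (k0, l) = f (k0, (l - J (t * k0 + a - i) + J (t * k0 + a - i')) mod n)"
      by (rule Glem[OF ia i'a kl wX fe vmove[OF ia i'a kl, symmetric]])
    moreover have "l - J (t * k0 + a - i) + J (t * k0 + a - i') = l + c"
      by (simp add: e1 e2 c_def)
    ultimately show "f (k0, l) = f (k0, (l + c) mod n)" by simp
  qed
  have colall: "f (k2, l2) = f (k2, l3)" if z1: "(k2, l2) \<in> X" and z2: "(k2, l3) \<in> X" for k2 l2 l3
  proof -
    define b where "b = (k2 - t * k0) mod n"
    have bX: "(0, b) \<in> X" using n_pos by (simp add: memX b_def mod_in)
    have hit: "\<exists>l. 0 \<le> l \<and> l < n \<and> \<sigma> (0, b) (k0, l) = (k2, l2)" if "(k2, l2) \<in> X" for l2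
    proof -
      obtain l where l: "0 \<le> l" "l < n" "[t * l = l2 + t * J (t * k0 + b)] (mod n)" using solve by blast
      have "(t * k0 + b) mod n = (t * k0 + (k2 - t * k0)) mod n" unfolding b_def by (simp only: mod_add_right_eq)
      hence 1: "(t * k0 + b) mod n = k2" using that by (simp add: memX)
      have "[t * (l - J (t * k0 + b)) = t * l - t * J (t * k0 + b)] (mod n)" by (simp add: algebra_simps)
      also have "[t * l - t * J (t * k0 + b) = (l2 + t * J (t * k0 + b)) - t * J (t * k0 + b)] (mod n)"
        by (intro cong_diff l(3) cong_refl)
      finally have "(t * (l - J (t * k0 + b))) mod n = l2" using that by (simp add: memX cong_def)
      thus ?thesis using l 1 by (auto simp: sig)
    qed
    obtain la where la: "0 \<le> la" "la < n" "\<sigma> (0, b) (k0, la) = (k2, l2)" using hit[OF z1] by (elim exE conjE) simp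
    obtain lb where lb: "0 \<le> lb" "lb < n" "\<sigma> (0, b) (k0, lb) = (k2, l3)" using hit[OF z2] by (elim exE conjE) simp
    have "f (\<sigma> (0, b) (k0, la)) = f (\<sigma> (0, b) (k0, lb))"
      using colk0[OF la(1,2) lb(1,2)] la lb k0 by (intro F2[OF bX]) (simp_all add: memX)
    thus ?thesis using la lb by simp
  qed
  have n1: "1 < n" by (rule n_gt)
  have k00: "(k0, 0) \<in> X" and k01: "(k0, 1) \<in> X" using k0 n1 by (simp_all add: memX)
  have f01: "f (k0, 0) = f (k0, 1)" using colk0[of 0 1] n1 by simp
  have step: "f (mm, 0) = f ((mm + 1) mod n, 0)" if "0 \<le> mm" "mm < n" for mm
  proof -
    obtain k where k: "0 \<le> k" "k < n" "[t * k = mm] (mod n)" using solve by blast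
    have kX: "(k, 0) \<in> X" using k n_pos by (simp add: memX)
    have "f (\<sigma> (k0, 0) (k, 0)) = f (\<sigma> (k0, 1) (k, 0))" by (rule F1[OF k00 k01 kX f01])
    moreover have "fst (\<sigma> (k0, 0) (k, 0)) = mm" using k that by (simp add: sig cong_def)
    moreover have "fst (\<sigma> (k0, 1) (k, 0)) = (mm + 1) mod n"
    proof -
      have "[t * k + 1 = mm + 1] (mod n)" by (intro cong_add k(3) cong_refl)
      thus ?thesis by (simp add: sig cong_def)
    qed
    moreover have "\<sigma> (k0, 0) (k, 0) \<in> X" "\<sigma> (k0, 1) (k, 0) \<in> X" by (rule sig_in)+
    ultimately have "f (mm, snd (\<sigma> (k0, 0) (k, 0))) = f ((mm + 1) mod n, snd (\<sigma> (k0, 1) (k, 0)))"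
      "(mm, snd (\<sigma> (k0, 0) (k, 0))) \<in> X" "((mm + 1) mod n, snd (\<sigma> (k0, 1) (k, 0))) \<in> X"
      by (metis prod.collapse)+
    moreover have "(mm, 0) \<in> X" "((mm + 1) mod n, 0) \<in> X" using that n_pos by (simp_all add: memX mod_in)
    ultimately show ?thesis using colall by metis
  qed
  have allc: "f (mm, 0) = f (0, 0)" if "0 \<le> mm" "mm < n" for mm
    using col_gen[where g = "\<lambda>m. f (m, 0)" and c = 1, OF _ step that, of 0] n_pos by simp
  show ?thesis
  proof
    fix z assume z: "z \<in> X"
    obtain k l where zz: "z = (k, l)" by (cases z)
    have "f (k, l) = f (k, 0)" using z colall[of k l 0] n_pos by (simp add: zz memX)
    also have "\<dots> = f (0, 0)" using z by (intro allc) (simp_all add: zz memX)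
    finally show "f z = f (0, 0)" by (simp add: zz)
  qed
qed


lemma vert_collapse:
  assumes kl: "(k, l) \<in> X" and kl': "(k, l') \<in> X" and ne: "l \<noteq> l'" and fe: "f (k, l) = f (k, l')"
  shows "\<forall>z\<in>X. f z = f (0, 0)"
proof -
  obtain z1 where z1: "0 \<le> z1" "z1 < n" "[t * z1 = l' - l] (mod n)" using solve by blast
  have "[t * z1 + l = (l' - l) + l] (mod n)" by (intro cong_add z1(3) cong_refl)
  hence c1: "[t * z1 + l = l'] (mod n)" by simp
  hence c2: "[t * z1 + l - k = l' - k] (mod n)" by (intro cong_diff cong_refl)
  have "\<sigma> (k, l) (z1, 0) = \<sigma> (k, l') (0, 0)"
    using c1 J_cong[OF c2] kl' by (simp add: sig cong_def memX)
  moreover have "(z1, 0) \<in> X" "(0, 0) \<in> X" using z1 n_pos by (simp_all add: memX)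
  ultimately have fz: "f (z1, 0) = f (0, 0)" using Glem[OF kl kl' _ _ fe] by blast
  have "z1 \<noteq> 0"
  proof
    assume "z1 = 0"
    with c1 have "[l = l'] (mod n)" by simp
    thus False using ne kl kl' eq_of_cong by (simp add: memX)
  qed
  thus ?thesis using collapse[OF \<open>(z1, 0) \<in> X\<close> \<open>(0, 0) \<in> X\<close> _ fz] by blast
qed

lemma main_collapse:
  assumes hi: "\<forall>i. i mod n \<noteq> 0 \<longrightarrow> coprime (j 0 - j (i mod n)) n"
    and x: "x \<in> X" and x': "x' \<in> X" and ne: "x \<noteq> x'" and fe: "f x = f x'"
  shows "\<forall>z\<in>X. f z = f (0, 0)"
proof -
  obtain i a where xx: "x = (i, a)" by (cases x)
  obtain i' a' where xx': "x' = (i', a')" by (cases x')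
  have r: "0 \<le> i" "i < n" "0 \<le> a" "a < n" "0 \<le> i'" "i' < n" "0 \<le> a'" "a' < n"
    using x x' by (simp_all add: xx xx' memX)
  show ?thesis
  proof (cases "a = a'")
    case True
    hence "i \<noteq> i'" using ne by (simp add: xx xx')
    moreover have "(i, a) \<in> X" "(i', a) \<in> X" "f (i, a) = f (i', a)" using x x' fe True by (simp_all add: xx xx')
    ultimately show ?thesis using collapse by blast
  next
    case aa: False
    show ?thesis
    proof (cases "i = i'")
      case True
      have "(i, a) \<in> X" "(i, a') \<in> X" "f (i, a) = f (i, a')" using x x' fe True by (simp_all add: xx xx')
      thus ?thesis using vert_collapse aa by blast
    next
      case ii: False
      show ?thesis
      proof (cases "[a - i = a' - i'] (mod n)")
        case True
        have z0: "(0, 0) \<in> X" using n_pos by (simp add: memX)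
        have "f (\<sigma> x (0, 0)) = f (\<sigma> x' (0, 0))" by (rule F1[OF x x' z0 fe])
        moreover have "J (a - i) = J (a' - i')" by (rule J_cong[OF True])
        ultimately have "f (a, (t * (0 - J (a' - i'))) mod n) = f (a', (t * (0 - J (a' - i'))) mod n)"
          using r by (simp add: xx xx' sig)
        moreover have "(a, (t * (0 - J (a' - i'))) mod n) \<in> X" "(a', (t * (0 - J (a' - i'))) mod n) \<in> X"
          using r by (simp_all add: memX mod_in)
        ultimately show ?thesis using collapse aa by blast
      next
        case nc: False
        have n2: "n \<noteq> 2"
        proof
          assume n2: "n = 2"
          have "(2::int) dvd (a - i - (a' - i'))" using r aa ii n2 by presburger
          hence "[a - i = a' - i'] (mod n)" using n2 by (simp add: cong_iff_dvd_diff)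
          thus False using nc by simp
        qed
        obtain \<delta> where d: "0 \<le> \<delta>" "\<delta> < n" "[t * \<delta> = a - a'] (mod n)" using solve by blast
        define gm where "gm = (\<lambda>(k, l). ((k + \<delta>) mod n, (l - J (t * k + a - i) + J (t * k + a - i')) mod n))"
        define p where "p = (a - a') mod n"
        define vm where "vm = (\<lambda>(k, l). (k, (l - J (t * k + 0 - p) + J (t * k + 0 - 0)) mod n))"
        have gmX: "gm z \<in> X" for z by (cases z) (simp add: gm_def memX mod_in)
        have vmX: "z \<in> X \<Longrightarrow> vm z \<in> X" for z by (cases z) (simp add: vm_def memX mod_in)
        have pX: "(p, 0) \<in> X" and z0: "(0, 0) \<in> X" using n_pos by (simp_all add: p_def memX mod_in)
        have gmeq: "\<sigma> (i', a') (gm z) = \<sigma> (i, a) z" for z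
        proof -
          obtain k l where zz: "z = (k, l)" by (cases z)
          have "[t * ((k + \<delta>) mod n) + a' = t * k + t * \<delta> + a'] (mod n)"
            by (rule cong_trans[OF rmI(1)[OF rmI(3)[OF cong_refl modr] cong_refl]]) (simp add: algebra_simps)
          also have "[t * k + t * \<delta> + a' = t * k + (a - a') + a'] (mod n)"
            by (intro cong_add cong_refl d(3))
          finally have e1: "[t * ((k + \<delta>) mod n) + a' = t * k + a] (mod n)" by simp
          hence e2: "J (t * ((k + \<delta>) mod n) + a' - i') = J (t * k + a - i')"
            by (intro J_cong cong_diff cong_refl)
          have "[t * ((l - J (t * k + a - i) + J (t * k + a - i')) mod n - J (t * k + a - i'))
                = t * ((l - J (t * k + a - i) + J (t * k + a - i')) - J (t * k + a - i'))] (mod n)"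
            by (intro rmI)
          hence e3: "(t * ((l - J (t * k + a - i) + J (t * k + a - i')) mod n - J (t * k + a - i'))) mod n
             = (t * (l - J (t * k + a - i))) mod n" by (simp add: cong_def)
          show ?thesis using e1 e2 e3 by (simp add: zz gm_def sig cong_def)
        qed
        have vmeq: "z \<in> X \<Longrightarrow> \<sigma> (0, 0) (vm z) = \<sigma> (p, 0) z" for z
        proof -
          assume zX: "z \<in> X"
          obtain k l where zz: "z = (k, l)" by (cases z)
          show ?thesis using vmove[OF pX z0 zX[unfolded zz]] by (simp add: zz vm_def)
        qed
        have G: "z \<in> X \<Longrightarrow> f z = f (gm z)" for z
          by (rule Glem[OF x x' _ gmX fe]) (simp_all add: xx xx' gmeq[symmetric])
        have V: "z \<in> X \<Longrightarrow> w \<in> X \<Longrightarrow> f z = f w \<Longrightarrow> f (vm z) = f (vm w)" for z w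
          by (rule Vlem[OF pX z0 _ _ vmX vmX vmeq[symmetric] vmeq[symmetric]])
        have "f (vm (gm (0, 0))) = f (gm (vm (0, 0)))"
          using V[OF z0 gmX G[OF z0]] G[OF vmX[OF z0]] by simp
        moreover have "gm (0, 0) = (\<delta>, (0 - J (a - i) + J (a - i')) mod n)"
          using d by (simp add: gm_def)
        moreover have "vm (0, 0) = (0, (0 - J (- p) + J 0) mod n)" by (simp add: vm_def)
        ultimately have fe2: "f (\<delta>, ((0 - J (a - i) + J (a - i')) mod n - J (t * \<delta> - p) + J (t * \<delta>)) mod n)
           = f (\<delta>, ((0 - J (- p) + J 0) mod n - J (a - i) + J (a - i')) mod n)"
          using d by (simp add: gm_def vm_def)
        define A2 where "A2 = ((0 - J (a - i) + J (a - i')) mod n - J (t * \<delta> - p) + J (t * \<delta>)) mod n"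
        define B2 where "B2 = ((0 - J (- p) + J 0) mod n - J (a - i) + J (a - i')) mod n"
        have "A2 \<noteq> B2"
        proof
          assume AB: "A2 = B2"
          have Jp: "J (t * \<delta> - p) = J 0"
            by (rule J_cong) (use cong_diff[OF d(3) modr[of "a - a'"]] in \<open>simp add: p_def\<close>)
          have Jt: "J (t * \<delta>) = J (a - a')" by (rule J_cong[OF d(3)])
          have Jm: "[J (- p) = J (a - a')] (mod n)"
          proof -
            have "J (- p) = J (- (a - a'))" by (rule J_cong) (simp add: p_def cong_def mod_simps)
            thus ?thesis using jsym[of "a - a'"] by simp
          qed
          have "[A2 = (0 - J (a - i) + J (a - i')) - J 0 + J (a - a')] (mod n)"
            unfolding A2_def Jp Jt by (rule cong_trans[OF modr]) (intro rmI)
          moreover have "[B2 = (0 - J (a - a') + J 0) - J (a - i) + J (a - i')] (mod n)"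
            unfolding B2_def by (rule cong_trans[OF modr]) (intro rmI Jm cong_mod_leftI)
          ultimately have "[(0 - J (a - i) + J (a - i')) - J 0 + J (a - a') = (0 - J (a - a') + J 0) - J (a - i) + J (a - i')] (mod n)"
            using AB by (metis cong_sym cong_trans)
          hence "n dvd ((0 - J (a - i) + J (a - i')) - J 0 + J (a - a')) - ((0 - J (a - a') + J 0) - J (a - i) + J (a - i'))"
            by (simp only: cong_iff_dvd_diff)
          moreover have "((0 - J (a - i) + J (a - i')) - J 0 + J (a - a')) - ((0 - J (a - a') + J 0) - J (a - i) + J (a - i'))
                = 2 * (J (a - a') - J 0)" by (simp add: algebra_simps)
          ultimately have dv: "n dvd 2 * (J (a - a') - J 0)" by simp
          have "(a - a') mod n \<noteq> 0"
          proof
            assume "(a - a') mod n = 0"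
            hence "[a = a'] (mod n)" by (simp add: cong_iff_dvd_diff dvd_eq_mod_eq_0)
            thus False using aa r eq_of_cong by simp
          qed
          hence "coprime (j 0 - j ((a - a') mod n)) n" using hi by blast
          hence "coprime (J 0 - J (a - a')) n" by (simp add: J_def)
          hence "coprime (J (a - a') - J 0) n" by (metis coprime_minus_left_iff minus_diff_eq)
          hence "coprime n (J (a - a') - J 0)" by (simp add: ac_simps)
          hence "n dvd 2" using dv by (metis coprime_dvd_mult_left_iff)
          hence "n \<le> 2" by (simp add: zdvd_imp_le)
          thus False using n2 n_gt by simp
        qed
        moreover have "(\<delta>, A2) \<in> X" "(\<delta>, B2) \<in> X" using d by (simp_all add: A2_def B2_def memX mod_in)
        ultimately show ?thesis using vert_collapse fe2 unfolding A2_def[symmetric] B2_def[symmetric] by blast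
      qed
    qed
  qed
qed

end
end

theorem mainTheorem5:
  fixes n t :: int and j :: "int \<Rightarrow> int"
  assumes n: "n > 1"
    and t_unit: "coprime t n"
    and j_sym: "\<forall>i. [j ((- i) mod n) = j (i mod n)] (mod n)"
    and j_pow: "\<forall>i s. [j ((zpow_mod n t s * i) mod n)
                      = zpow_mod n t s * j (i mod n) - (zpow_mod n t s - 1) * j 0] (mod n)"
    and j_sep: "\<forall>i. i mod n \<noteq> 0 \<longrightarrow>
                   (\<exists>k. coprime (j ((i + k) mod n) - j (k mod n)) n)"
  shows "is_solution (carrierZ2 n) (rZ n t j)
       \<and> indecomposable (carrierZ2 n) (rZ n t j)
       \<and> irretractable (carrierZ2 n) (rZ n t j)
       \<and> ((\<forall>i. i mod n \<noteq> 0 \<longrightarrow> coprime (j 0 - j (i mod n)) n)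
          \<and> (\<forall>i k. \<not> [j (i mod n) = j (k mod n)] (mod n)
                      \<longrightarrow> coprime (j (i mod n) - j (k mod n)) n)
          \<longrightarrow> is_simple (carrierZ2 n) (rZ n t j) TYPE('b))"
proof -
  have z1: "zpow_mod n t 1 = t" by (simp add: zpow_mod_def)
  interpret Zc n t j
  proof
    show "n > 1" by (rule n)
    show "coprime t n" by (rule t_unit)
    show "\<And>i. [j ((- i) mod n) = j (i mod n)] (mod n)" using j_sym by blast
    show "\<And>i. [j ((t * i) mod n) = t * j (i mod n) - (t - 1) * j 0] (mod n)"
      using j_pow z1 by metis
    show "\<And>i. i mod n \<noteq> 0 \<Longrightarrow> \<exists>k. coprime (j ((i + k) mod n) - j (k mod n)) n"
      using j_sep by blast
  qed
  have simp_part: "is_simple (carrierZ2 n) (rZ n t j) TYPE('b)"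
    if hi: "\<forall>i. i mod n \<noteq> 0 \<longrightarrow> coprime (j 0 - j (i mod n)) n"
  proof -
    have cX: "card (carrierZ2 n) = nat n * nat n" by (simp add: carrierZ2_def card_cartesian_product)
    have "card (carrierZ2 n) > 1"
    proof -
      have "nat n \<ge> 2" using n by simp
      hence "nat n * nat n \<ge> 2 * 2" by (intro mult_mono) simp_all
      thus ?thesis using cX by simp
    qed
    moreover have "bij_betw f (carrierZ2 n) Y \<or> card Y = 1"
      if sol: "is_solution Y s" and hom: "is_hom (carrierZ2 n) (rZ n t j) Y s f" and sj: "f ` carrierZ2 n = Y"
      for Y :: "'b set" and s f
    proof (cases "inj_on f (carrierZ2 n)")
      case True
      thus ?thesis using sj by (simp add: bij_betw_def)
    next
      case False
      then obtain x x' where x: "x \<in> carrierZ2 n" "x' \<in> carrierZ2 n" "x \<noteq> x'" "f x = f x'"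
        unfolding inj_on_def by blast
      have all: "\<forall>z\<in>carrierZ2 n. f z = f (0, 0)"
        by (rule main_collapse[OF sol hom sj hi x])
      have z0: "(0, 0) \<in> carrierZ2 n" using n by (simp add: memX)
      have "Y \<subseteq> {f (0, 0)}"
      proof
        fix y assume "y \<in> Y"
        then obtain z where z: "z \<in> carrierZ2 n" "y = f z" using sj by blast
        have "f z = f (0, 0)" using all z(1) by blast
        thus "y \<in> {f (0, 0)}" using z(2) by simp
      qed
      moreover have "f (0, 0) \<in> Y" using sj z0 by blast
      ultimately have "Y = {f (0, 0)}" by blast
      thus ?thesis by simp
    qed
    ultimately show ?thesis unfolding is_simple_def by blast
  qed
  show ?thesis using is_sol indec irr simp_part by blast
qed

end
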